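(* Let $N\ge2$, $\mathcal{D}=\{d_1,\dots,d_N\}\subset\mathbb{Z}$ with $\#\mathcal{D}=N$, and $\tau_{d_i}(x)=\frac1N(x+d_i)$ on $\mathbb{R}$. If the attractor $X$ of $\{\tau_{d_i}\}$ is a self-similar tile (equivalently, has positive Lebesgue measure), then there exists $\mathcal{E}\subset\mathbb{Z}$ such that $\mathcal{D}\oplus\mathcal{E}=\mathbb{Z}$.
   Context: The attractor $X$ is the unique nonempty compact set with $X=\bigcup_i\tau_{d_i}(X)$; it is a self-similar tile if it has positive Lebesgue measure (then it tiles $\mathbb{R}$ by translations). $\mathcal{D}\oplus\mathcal{E}=\mathbb{Z}$ means every integer is uniquely $d+e$ with $d\in\mathcal{D}$, $e\in\mathcal{E}$. *)

theory Defs
  imports "HOL-Analysis.Analysis"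
begin

definition tau :: "nat \<Rightarrow> int \<Rightarrow> real \<Rightarrow> real" where
  "tau N d x = (x + real_of_int d) / real N"

text \<open>X is the attractor of the IFS {tau_d : d in D}: the unique nonempty compact
  set with X = union of tau_d(X). (Uniqueness is a theorem, so it suffices to
  characterise X by these properties.)\<close>
definition is_attractor :: "nat \<Rightarrow> int set \<Rightarrow> real set \<Rightarrow> bool" where
  "is_attractor N D X \<longleftrightarrow> X \<noteq> {} \<and> compact X \<and> X = (\<Union>d\<in>D. tau N d ` X)"

definition direct_sum_Z :: "int set \<Rightarrow> int set \<Rightarrow> bool" where
  "direct_sum_Z D E \<longleftrightarrow> (\<forall>z::int. \<exists>!p. p \<in> D \<times> E \<and> z = fst p + snd p)"

end

theory Submission
  imports Defs
begin


definition win :: "nat \<Rightarrow> int set" where "win M = {- int M .. int M}"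

definition agree :: "(nat \<Rightarrow> int set) \<Rightarrow> nat \<Rightarrow> nat set \<Rightarrow> bool" where
  "agree Es M J \<longleftrightarrow> (\<forall>n\<in>J. \<forall>n'\<in>J. Es n \<inter> win M = Es n' \<inter> win M)"

lemma refine_step:
  fixes Es :: "nat \<Rightarrow> int set"
  assumes "infinite I"
  shows "\<exists>J. J \<subseteq> I \<and> infinite J \<and> agree Es M J"
proof -
  have "finite ((\<lambda>n. Es n \<inter> win M) ` I)"
    by (rule finite_subset[of _ "Pow (win M)"]) (auto simp: win_def)
  then obtain a0 where "a0 \<in> I" "infinite {a\<in>I. Es a \<inter> win M = Es a0 \<inter> win M}"
    using pigeonhole_infinite[OF assms] by blast
  moreover have "agree Es M {a\<in>I. Es a \<inter> win M = Es a0 \<inter> win M}"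
    unfolding agree_def by auto
  ultimately show ?thesis by (intro exI[of _ "{a\<in>I. Es a \<inter> win M = Es a0 \<inter> win M}"]) auto
qed

primrec Iseq :: "(nat \<Rightarrow> int set) \<Rightarrow> nat \<Rightarrow> nat set" where
  "Iseq Es 0 = UNIV"
| "Iseq Es (Suc M) = (SOME J. J \<subseteq> Iseq Es M \<and> infinite J \<and> agree Es M J)"

lemma Iseq_suc:
  assumes "infinite (Iseq Es M)"
  shows "Iseq Es (Suc M) \<subseteq> Iseq Es M \<and> infinite (Iseq Es (Suc M)) \<and> agree Es M (Iseq Es (Suc M))"
proof -
  let ?P = "\<lambda>J. J \<subseteq> Iseq Es M \<and> infinite J \<and> agree Es M J"
  have "\<exists>J. ?P J" by (rule refine_step[OF assms])
  then have P: "?P (SOME J. ?P J)" by (rule someI_ex)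
  have eq: "Iseq Es (Suc M) = (SOME J. ?P J)" by (simp only: Iseq.simps)
  show ?thesis using P unfolding eq[symmetric] .
qed

lemma Iseq_inf: "infinite (Iseq Es M)"
proof (induction M)
  case 0 show ?case by simp
next
  case (Suc M) then show ?case using Iseq_suc[OF Suc.IH] by blast
qed

lemma Iseq_sub: "Iseq Es (Suc M) \<subseteq> Iseq Es M"
  using Iseq_suc[OF Iseq_inf] by blast

lemma Iseq_agree: "agree Es M (Iseq Es (Suc M))"
  using Iseq_suc[OF Iseq_inf] by blast

lemma Iseq_mono: "M \<le> K \<Longrightarrow> Iseq Es K \<subseteq> Iseq Es M"
proof (induction K)
  case 0 then show ?case by simp
next
  case (Suc K)
  show ?case
  proof (cases "M = Suc K")
    case True then show ?thesis by simp
  next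
    case False then have "M \<le> K" using Suc.prems by simp
    then show ?thesis using Suc.IH Iseq_sub[of Es K] by blast
  qed
qed

lemma compactness_Z:
  fixes Es :: "nat \<Rightarrow> int set"
  shows "\<exists>E. \<forall>M. \<exists>n\<ge>M. E \<inter> win M = Es n \<inter> win M"
proof -
  define E where "E = {z. \<forall>n\<in>Iseq Es (Suc (nat \<bar>z\<bar>)). z \<in> Es n}"
  have "\<exists>n\<ge>M. E \<inter> win M = Es n \<inter> win M" for M
  proof -
    have "infinite (Iseq Es (Suc M))" by (rule Iseq_inf)
    then obtain n where n: "n \<in> Iseq Es (Suc M)" "n \<ge> M"
      using infinite_nat_iff_unbounded_le by blast
    have "z \<in> E \<longleftrightarrow> z \<in> Es n" if z: "z \<in> win M" for z
    proof -
      define K where "K = nat \<bar>z\<bar>"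
      have "K \<le> M" using z by (auto simp: win_def K_def)
      then have nK: "n \<in> Iseq Es (Suc K)" using Iseq_mono[of "Suc K" "Suc M" Es] n by auto
      have zK: "z \<in> win K" by (auto simp: win_def K_def)
      have ag: "agree Es K (Iseq Es (Suc K))" by (rule Iseq_agree)
      have agr: "z \<in> Es n' \<longleftrightarrow> z \<in> Es n" if "n' \<in> Iseq Es (Suc K)" for n'
      proof -
        have "Es n' \<inter> win K = Es n \<inter> win K" using ag that nK unfolding agree_def by blast
        then show ?thesis using zK by blast
      qed
      have "z \<in> E \<longleftrightarrow> (\<forall>n'\<in>Iseq Es (Suc K). z \<in> Es n')" unfolding E_def K_def by simp
      then show ?thesis using agr nK by blast
    qed
    then have "E \<inter> win M = Es n \<inter> win M" by blast
    then show ?thesis using n by blast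
  qed
  then show ?thesis by blast
qed



fun tw :: "nat \<Rightarrow> int list \<Rightarrow> int" where
  "tw N [] = 0"
| "tw N (d # w) = d + int N * tw N w"

lemma scale_image: "(c::real) \<noteq> 0 \<Longrightarrow> (\<lambda>x. c *\<^sub>R x + 0) ` A = {y. y / c \<in> A}"
proof (intro set_eqI iffI)
  fix y assume "c \<noteq> 0" "y \<in> (\<lambda>x. c *\<^sub>R x + 0) ` A"
  then show "y \<in> {y. y / c \<in> A}" by auto
next
  fix y assume c: "c \<noteq> 0" and "y \<in> {y. y / c \<in> A}"
  then have "y / c \<in> A" "y = c *\<^sub>R (y / c) + 0" by auto
  then show "y \<in> (\<lambda>x. c *\<^sub>R x + 0) ` A" by blast
qed

lemma shift_image: "(+) (c::real) ` A = {y. y - c \<in> A}"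
proof (intro set_eqI iffI)
  fix y assume "y \<in> (+) c ` A" then show "y \<in> {y. y - c \<in> A}" by auto
next
  fix y assume "y \<in> {y. y - c \<in> A}"
  then have "y - c \<in> A" "y = c + (y - c)" by auto
  then show "y \<in> (+) c ` A" by blast
qed

locale ifs =
  fixes N :: nat and D :: "int set" and X :: "real set"
  assumes N2: "N \<ge> 2" and finD: "finite D" and cardD: "card D = N"
    and attr: "is_attractor N D X" and pos: "emeasure lebesgue X > 0"
begin

definition W :: "nat \<Rightarrow> int list set" where "W k = {w. set w \<subseteq> D \<and> length w = k}"
definition Y :: "nat \<Rightarrow> real set" where "Y k = {y. y / real N ^ k \<in> X}"
definition S :: "int list \<Rightarrow> real set" where "S w = {y. y - real_of_int (tw N w) \<in> X}"

lemma Npos: "real N > 0" using N2 by simp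

lemma Xcomp: "compact X" using attr unfolding is_attractor_def by blast
lemma Xeq: "X = (\<Union>d\<in>D. tau N d ` X)" using attr unfolding is_attractor_def by blast

lemma key: "u / real N \<in> X \<longleftrightarrow> (\<exists>d\<in>D. u - real_of_int d \<in> X)"
proof
  assume "u / real N \<in> X"
  then obtain d x where d: "d \<in> D" "x \<in> X" "u / real N = tau N d x"
    using Xeq by blast
  then have "u = x + real_of_int d" using Npos unfolding tau_def by (simp add: field_simps)
  then show "\<exists>d\<in>D. u - real_of_int d \<in> X" using d by (intro bexI[of _ d]) auto
next
  assume "\<exists>d\<in>D. u - real_of_int d \<in> X"
  then obtain d where d: "d \<in> D" "u - real_of_int d \<in> X" by blast
  then have "tau N d (u - real_of_int d) = u / real N" unfolding tau_def by simp
  then have "u / real N \<in> tau N d ` X" using d by (metis imageI)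
  then show "u / real N \<in> X" using d Xeq by blast
qed

lemma W0: "W 0 = {[]}" unfolding W_def by auto

lemma W_Suc: "(\<exists>w\<in>W (Suc k). P w) \<longleftrightarrow> (\<exists>d\<in>D. \<exists>v\<in>W k. P (d # v))"
proof
  assume "\<exists>w\<in>W (Suc k). P w"
  then obtain w where w: "w \<in> W (Suc k)" "P w" by blast
  then obtain d v where "w = d # v" "length v = k" unfolding W_def by (auto simp: length_Suc_conv)
  then show "\<exists>d\<in>D. \<exists>v\<in>W k. P (d # v)" using w unfolding W_def by auto
next
  assume "\<exists>d\<in>D. \<exists>v\<in>W k. P (d # v)"
  then obtain d v where "d \<in> D" "v \<in> W k" "P (d # v)" by blast
  then show "\<exists>w\<in>W (Suc k). P w" unfolding W_def by (intro bexI[of _ "d # v"]) auto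
qed

lemma Y_char: "y \<in> Y k \<longleftrightarrow> (\<exists>w\<in>W k. y \<in> S w)"
proof (induction k arbitrary: y)
  case 0
  then show ?case by (simp add: Y_def S_def W0)
next
  case (Suc k)
  have "y \<in> Y (Suc k) \<longleftrightarrow> y / real N \<in> Y k"
    unfolding Y_def by (simp add: field_simps)
  also have "\<dots> \<longleftrightarrow> (\<exists>v\<in>W k. y / real N - real_of_int (tw N v) \<in> X)"
    using Suc.IH unfolding S_def by simp
  also have "\<dots> \<longleftrightarrow> (\<exists>v\<in>W k. \<exists>d\<in>D. y - real_of_int (tw N (d # v)) \<in> X)"
  proof -
    have "(y / real N - real_of_int (tw N v) \<in> X) \<longleftrightarrow> (\<exists>d\<in>D. y - real_of_int (tw N (d # v)) \<in> X)" for v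
    proof -
      have "y / real N - real_of_int (tw N v) = (y - real N * real_of_int (tw N v)) / real N"
        using Npos by (simp add: field_simps)
      moreover have "\<And>d. y - real_of_int (tw N (d # v)) = (y - real N * real_of_int (tw N v)) - real_of_int d"
        by simp
      ultimately show ?thesis using key[of "y - real N * real_of_int (tw N v)"] by (simp add: algebra_simps)
    qed
    then show ?thesis by blast
  qed
  also have "\<dots> \<longleftrightarrow> (\<exists>w\<in>W (Suc k). y \<in> S w)"
    unfolding W_Suc S_def by blast
  finally show ?case .
qed

lemma Y_Union: "Y k = (\<Union>w\<in>W k. S w)"
  using Y_char by blast

lemma finW: "finite (W k)" unfolding W_def using finite_lists_length_eq[OF finD] .
lemma cardW: "card (W k) = N ^ k" unfolding W_def using card_lists_length_eq[OF finD] cardD by simp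

lemma X_lmeas: "X \<in> lmeasurable" using Xcomp by (rule lmeasurable_compact)

definition mu where "mu = measure lebesgue X"

lemma mu_pos: "mu > 0"
  using pos emeasure_eq_measure2[OF X_lmeas] unfolding mu_def by simp

lemma S_img: "S w = (+) (real_of_int (tw N w)) ` X"
  unfolding S_def shift_image by simp

lemma S_comp: "compact (S w)" unfolding S_img by (rule compact_translation[OF Xcomp])
lemma S_lmeas: "S w \<in> lmeasurable" using S_comp by (rule lmeasurable_compact)
lemma S_meas: "measure lebesgue (S w) = mu" unfolding S_img mu_def by (rule measure_translation)

lemma Y_img: "Y k = (\<lambda>x. (real N ^ k) *\<^sub>R x + 0) ` X"
  unfolding Y_def using Npos by (subst scale_image) auto

lemma Y_comp: "compact (Y k)"
  unfolding Y_img using compact_scaling[OF Xcomp, of "real N ^ k"] by simp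
lemma Y_lmeas: "Y k \<in> lmeasurable" using Y_comp by (rule lmeasurable_compact)
lemma Y_meas: "measure lebesgue (Y k) = real N ^ k * mu"
  unfolding Y_img mu_def measure_lebesgue_affine by simp

lemma null_inter:
  assumes w: "w \<in> W k" "w' \<in> W k" "w \<noteq> w'"
  shows "measure lebesgue (S w \<inter> S w') = 0"
proof -
  let ?F = "W k - {w, w'}"
  have U: "Y k = (S w \<union> S w') \<union> (\<Union>v\<in>?F. S v)" using Y_Union w by blast
  have sF: "(\<Union>v\<in>?F. S v) \<in> sets lebesgue"
    using finW S_lmeas by (intro sets.finite_UN) auto
  have m1: "measure lebesgue (Y k) \<le> measure lebesgue (S w \<union> S w') + measure lebesgue (\<Union>v\<in>?F. S v)"
    unfolding U using S_lmeas sF by (intro measure_Un_le) auto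
  have m2: "measure lebesgue (S w \<union> S w') = 2 * mu - measure lebesgue (S w \<inter> S w')"
    using measure_Un3[OF S_lmeas S_lmeas, of w w'] S_meas by simp
  have m3: "measure lebesgue (\<Union>v\<in>?F. S v) \<le> (\<Sum>v\<in>?F. measure lebesgue (S v))"
    using finW S_lmeas by (intro measure_UNION_le) auto
  have cF: "card ?F = N ^ k - 2"
    using w finW cardW by (subst card_Diff_subset) auto
  have c2: "N ^ k \<ge> 2"
  proof -
    have "card {w, w'} \<le> card (W k)" using w finW by (intro card_mono) auto
    then show ?thesis using w cardW by simp
  qed
  have "(\<Sum>v\<in>?F. measure lebesgue (S v)) = real (N ^ k - 2) * mu"
    using S_meas cF by simp
  also have "\<dots> = real N ^ k * mu - 2 * mu" using c2 by (simp add: of_nat_diff algebra_simps)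
  finally have "real N ^ k * mu \<le> 2 * mu - measure lebesgue (S w \<inter> S w') + (real N ^ k * mu - 2 * mu)"
    using m1 m2 m3 Y_meas[of k] by linarith
  then show ?thesis using measure_nonneg[of lebesgue "S w \<inter> S w'"] by linarith
qed

lemma floor_char:
  assumes h: "(h::real) > 0"
  shows "y \<in> {real_of_int j * h ..< (real_of_int j + 1) * h} \<longleftrightarrow> \<lfloor>y / h\<rfloor> = j"
proof -
  have "y \<in> {real_of_int j * h ..< (real_of_int j + 1) * h} \<longleftrightarrow> real_of_int j \<le> y / h \<and> y / h < real_of_int j + 1"
    using h by (simp add: pos_le_divide_eq pos_divide_less_eq)
  also have "\<dots> \<longleftrightarrow> \<lfloor>y / h\<rfloor> = j" by (simp add: floor_eq_iff)
  finally show ?thesis .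
qed

lemma density:
  assumes dpos: "\<delta> > 0" and lpos: "(l::nat) > 0"
  shows "\<exists>k\<ge>1. \<exists>j::int. measure lebesgue ({real_of_int j * (l / real N ^ k) ..< (real_of_int j + 1) * (l / real N ^ k)} - X) < \<delta> * (l / real N ^ k)"
proof -
  obtain T where T: "open T" "X \<subseteq> T" "(T - X) \<in> lmeasurable" "emeasure lebesgue (T - X) < ennreal (\<delta> * mu)"
    using sets_lebesgue_outer_open[of X "\<delta> * mu"] X_lmeas mu_pos dpos by auto
  have mT: "measure lebesgue (T - X) < \<delta> * mu"
    using T(4) emeasure_eq_measure2[OF T(3)] by (simp add: ennreal_less_iff)
  obtain \<eta> where eta: "\<eta> > 0" "(\<Union>x\<in>X. ball x \<eta>) \<subseteq> T"
    using compact_subset_open_imp_ball_epsilon_subset[OF Xcomp T(1) T(2)] by blast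
  obtain k0 where k0: "l / \<eta> < real N ^ k0" using real_arch_pow[of "real N" "l / \<eta>"] N2 by auto
  define k where "k = Suc k0"
  define h where "h = l / real N ^ k"
  have hpos: "h > 0" unfolding h_def using lpos Npos by simp
  have "real N ^ k0 \<le> real N ^ k" unfolding k_def using N2 by simp
  then have "l / \<eta> < real N ^ k" using k0 by linarith
  then have "l < \<eta> * real N ^ k" using eta(1) by (simp add: divide_less_eq mult.commute)
  then have heta: "h < \<eta>" unfolding h_def using Npos by (simp add: divide_less_eq mult.commute)
  define I where "I j = {real_of_int j * h ..< (real_of_int j + 1) * h}" for j :: int
  have inI: "y \<in> I j \<longleftrightarrow> \<lfloor>y / h\<rfloor> = j" for y j unfolding I_def using floor_char[OF hpos] .
  show ?thesis
  proof (rule ccontr)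
    assume contra: "\<not> ?thesis"
    have k1: "k \<ge> 1" unfolding k_def by simp
    have big: "measure lebesgue (I j - X) \<ge> \<delta> * h" for j
    proof -
      have "\<not> (measure lebesgue (I j - X) < \<delta> * h)"
        using contra k1 unfolding I_def h_def by blast
      then show ?thesis by simp
    qed
    obtain B where B: "\<forall>x\<in>X. \<bar>x\<bar> \<le> B" using compact_imp_bounded[OF Xcomp] bounded_real by blast
    define J where "J = {j. I j \<inter> X \<noteq> {}}"
    have "J \<subseteq> {\<lfloor>- B / h\<rfloor> .. \<lfloor>B / h\<rfloor>}"
    proof
      fix j assume "j \<in> J"
      then obtain x where x0: "x \<in> X" "x \<in> I j" unfolding J_def by blast
      then have x: "x \<in> X" "\<lfloor>x / h\<rfloor> = j" using inI by auto
      have xb: "- B \<le> x" "x \<le> B" using B x(1) by auto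
      have "- B / h \<le> x / h" "x / h \<le> B / h" using divide_right_mono[OF xb(1), of h] divide_right_mono[OF xb(2), of h] hpos by auto
      then show "j \<in> {\<lfloor>- B / h\<rfloor> .. \<lfloor>B / h\<rfloor>}" using x(2) by (auto intro: floor_mono)
    qed
    then have finJ: "finite J" by (rule finite_subset) simp
    have cover: "X \<subseteq> (\<Union>j\<in>J. I j)"
    proof
      fix x assume "x \<in> X"
      moreover have "x \<in> I \<lfloor>x / h\<rfloor>" using inI by simp
      ultimately show "x \<in> (\<Union>j\<in>J. I j)" unfolding J_def by blast
    qed
    have IT: "I j \<subseteq> T" if "j \<in> J" for j
    proof
      fix y assume y: "y \<in> I j"
      obtain p where p: "p \<in> X" "p \<in> I j" using \<open>j \<in> J\<close> unfolding J_def by blast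
      have "dist p y < \<eta>" using y p(2) heta unfolding I_def dist_real_def by (auto simp: algebra_simps abs_less_iff)
      then have "y \<in> ball p \<eta>" by simp
      then show "y \<in> T" using eta(2) p(1) by blast
    qed
    have Isets: "I j \<in> sets lebesgue" for j unfolding I_def by simp
    have Imeas: "measure lebesgue (I j) = h" for j
    proof -
      have "measure lebesgue (I j) = measure lborel (I j)" by (rule measure_completion) (simp add: I_def)
      also have "\<dots> = h" unfolding I_def using hpos by (subst measure_lborel_Ico) (simp_all add: algebra_simps)
      finally show ?thesis .
    qed
    have Ilm: "I j \<in> lmeasurable" for j
    proof (rule fmeasurableI2)
      show "cbox (real_of_int j * h) ((real_of_int j + 1) * h) \<in> lmeasurable" by (rule lmeasurable_cbox)
      show "I j \<subseteq> cbox (real_of_int j * h) ((real_of_int j + 1) * h)" unfolding I_def by auto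
      show "I j \<in> sets lebesgue" by (rule Isets)
    qed
    have disj: "pairwise (\<lambda>i j. disjnt (I i - X) (I j - X)) J"
    proof (unfold pairwise_def, intro ballI impI)
      fix i j assume "i \<in> J" "j \<in> J" "i \<noteq> j"
      show "disjnt (I i - X) (I j - X)"
      proof (unfold disjnt_def, rule equals0I)
        fix y assume "y \<in> (I i - X) \<inter> (I j - X)"
        then have "\<lfloor>y / h\<rfloor> = i" "\<lfloor>y / h\<rfloor> = j" using inI by auto
        then show False using \<open>i \<noteq> j\<close> by simp
      qed
    qed
    have Dlm: "I j - X \<in> lmeasurable" for j using Ilm X_lmeas by (intro fmeasurable_Diff) auto
    have "measure lebesgue (\<Union>j\<in>J. I j - X) = (\<Sum>j\<in>J. measure lebesgue (I j - X))"
      using finJ disj Dlm by (intro measure_UNION') auto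
    also have "\<dots> \<ge> (\<Sum>j\<in>J. \<delta> * h)" using big by (intro sum_mono) auto
    finally have s1: "real (card J) * (\<delta> * h) \<le> measure lebesgue (\<Union>j\<in>J. I j - X)" by simp
    have "(\<Union>j\<in>J. I j - X) \<subseteq> T - X" using IT by blast
    then have "measure lebesgue (\<Union>j\<in>J. I j - X) \<le> measure lebesgue (T - X)"
      using finJ Isets X_lmeas T(3) by (intro measure_mono_fmeasurable) auto
    with s1 mT have A1: "real (card J) * (\<delta> * h) < \<delta> * mu" by linarith
    have "mu \<le> measure lebesgue (\<Union>j\<in>J. I j)"
      unfolding mu_def using cover finJ Ilm X_lmeas by (intro measure_mono_fmeasurable) auto
    also have "\<dots> \<le> (\<Sum>j\<in>J. measure lebesgue (I j))"
      using finJ Isets by (intro measure_UNION_le) auto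
    also have "\<dots> = real (card J) * h" using Imeas by simp
    finally have "\<delta> * mu \<le> \<delta> * (real (card J) * h)" using dpos by simp
    with A1 show False by (simp add: algebra_simps)
  qed
qed

lemma Ico_lmeas: "{a..<b::real} \<in> lmeasurable"
proof (rule fmeasurableI2)
  show "cbox a b \<in> lmeasurable" by (rule lmeasurable_cbox)
  show "{a..<b} \<subseteq> cbox a b" by auto
  show "{a..<b} \<in> sets lebesgue" by simp
qed

lemma stage:
  "\<exists>E. (\<forall>z. \<bar>z\<bar> \<le> int n \<longrightarrow> (\<exists>d\<in>D. \<exists>e\<in>E. z = d + e)) \<and>
       (\<forall>d\<in>D. \<forall>d'\<in>D. \<forall>e\<in>E. \<forall>e'\<in>E. d + e = d' + e' \<longrightarrow> d = d' \<and> e = e')"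
proof -
  define l where "l = 2 * n + 1"
  have lpos: "l > 0" unfolding l_def by simp
  obtain k j where k: "k \<ge> 1" and dj: "measure lebesgue ({real_of_int j * (l / real N ^ k) ..< (real_of_int j + 1) * (l / real N ^ k)} - X)
      < (1 / (real l)^2) * (l / real N ^ k)"
    using density[of "1 / (real l)^2" l] lpos by auto
  define c0 where "c0 = real N ^ k"
  have c0pos: "c0 > 0" unfolding c0_def using Npos by simp
  define m where "m = j * int l"
  define V where "V = {real_of_int m ..< real_of_int m + real l} - Y k"
  have V_img: "V = (\<lambda>x. c0 *\<^sub>R x + 0) ` ({real_of_int j * (l / c0) ..< (real_of_int j + 1) * (l / c0)} - X)"
  proof -
    have "y \<in> V \<longleftrightarrow> y / c0 \<in> {real_of_int j * (l / c0) ..< (real_of_int j + 1) * (l / c0)} - X" for y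
    proof -
      have "real_of_int j * (l / c0) \<le> y / c0 \<longleftrightarrow> real_of_int m \<le> y"
        unfolding m_def using c0pos by (simp add: field_simps)
      moreover have "y / c0 < (real_of_int j + 1) * (l / c0) \<longleftrightarrow> y < real_of_int m + real l"
        unfolding m_def using c0pos by (simp add: field_simps)
      ultimately show ?thesis unfolding V_def Y_def c0_def by auto
    qed
    then show ?thesis using c0pos by (subst scale_image) auto
  qed
  have mV: "measure lebesgue V < 1 / real l"
  proof -
    have "measure lebesgue V = c0 * measure lebesgue ({real_of_int j * (l / c0) ..< (real_of_int j + 1) * (l / c0)} - X)"
      unfolding V_img measure_lebesgue_affine using c0pos by simp
    also have "\<dots> < c0 * ((1 / (real l)^2) * (l / c0))"
      using dj c0pos unfolding c0_def by (intro mult_strict_left_mono) auto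
    also have "\<dots> = 1 / real l" using c0pos lpos by (simp add: field_simps power2_eq_square)
    finally show ?thesis .
  qed
  have V_lm: "V \<in> lmeasurable" unfolding V_def
    using Ico_lmeas Y_lmeas by (intro fmeasurable_Diff) auto
  define P where "P = {p. fst p \<in> W k \<and> snd p \<in> W k \<and> fst p \<noteq> snd p}"
  have finP: "finite P"
    by (rule finite_subset[of _ "W k \<times> W k"]) (auto simp: P_def finW)
  define Null where "Null = (\<Union>q\<in>UNIV \<times> P. (\<lambda>y. y - real_of_int (fst q)) ` (S (fst (snd q)) \<inter> S (snd (snd q))))"
  have Null_null: "Null \<in> null_sets lebesgue"
    unfolding Null_def
  proof (rule null_sets_UN')
    show "countable ((UNIV::int set) \<times> P)" using finP by (intro countable_SIGMA) (auto intro: countable_finite simp: countableI_type)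
  next
    fix q :: "int \<times> int list \<times> int list" assume q: "q \<in> UNIV \<times> P"
    let ?A = "(\<lambda>y. y - real_of_int (fst q)) ` (S (fst (snd q)) \<inter> S (snd (snd q)))"
    have "compact ?A" using S_comp by (intro compact_translation_subtract compact_Int) auto
    then have Alm: "?A \<in> lmeasurable" by (rule lmeasurable_compact)
    have "measure lebesgue ?A = 0"
      unfolding measure_translation_subtract using q null_inter unfolding P_def by auto
    then show "?A \<in> null_sets lebesgue"
      using Alm emeasure_eq_measure2[OF Alm] by (intro null_setsI) auto
  qed
  have mNull: "measure lebesgue Null = 0" using Null_null by (rule measure_eq_0_null_sets)
  have Null_lm: "Null \<in> lmeasurable" using Null_null by (rule fmeasurableI_null_sets)
  define Z where "Z = {m .. m + 2 * int n}"
  define Bad where "Bad = (\<Union>z\<in>Z. (\<lambda>y. y - real_of_int z) ` V)"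
  have Bad_lm: "Bad \<in> lmeasurable" unfolding Bad_def Z_def
    using V_lm by (intro fmeasurable.finite_UN measurable_translation_subtract) auto
  have cZ: "card Z = l" unfolding Z_def l_def by simp
  have "measure lebesgue Bad \<le> (\<Sum>z\<in>Z. measure lebesgue ((\<lambda>y. y - real_of_int z) ` V))"
    unfolding Bad_def using V_lm unfolding Z_def
    by (intro measure_UNION_le) (auto intro: fmeasurableD measurable_translation_subtract)
  also have "\<dots> = real l * measure lebesgue V" unfolding measure_translation_subtract using cZ by simp
  also have "\<dots> < real l * (1 / real l)" using mV lpos by (intro mult_strict_left_mono) auto
  also have "\<dots> = 1" using lpos by simp
  finally have mBad: "measure lebesgue Bad < 1" .
  have "\<exists>x\<in>{0..<1}. x \<notin> Bad \<and> x \<notin> Null"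
  proof (rule ccontr)
    assume "\<not> ?thesis"
    then have sub: "{0..<1::real} \<subseteq> Bad \<union> Null" by blast
    have "1 = measure lebesgue {0..<1::real}"
    proof -
      have "measure lebesgue {0..<1::real} = measure lborel {0..<1::real}" by (rule measure_completion) simp
      also have "\<dots> = 1" by (subst measure_lborel_Ico) simp_all
      finally show ?thesis by simp
    qed
    also have "\<dots> \<le> measure lebesgue (Bad \<union> Null)"
      using sub Bad_lm Null_lm by (intro measure_mono_fmeasurable) auto
    also have "\<dots> \<le> measure lebesgue Bad + measure lebesgue Null"
      using Bad_lm Null_lm by (intro measure_Un_le) auto
    finally show False using mBad mNull by simp
  qed
  then obtain x where x: "x \<in> {0..<1}" "x \<notin> Bad" "x \<notin> Null" by blast
  have cov: "x + real_of_int z \<in> Y k" if z: "z \<in> Z" for z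
  proof (rule ccontr)
    assume nY: "x + real_of_int z \<notin> Y k"
    have "real_of_int m \<le> real_of_int z" "real_of_int z \<le> real_of_int m + 2 * real n"
      using z unfolding Z_def by auto
    then have "x + real_of_int z \<in> V" unfolding V_def l_def using x(1) nY by auto
    then have "(x + real_of_int z) - real_of_int z \<in> (\<lambda>y. y - real_of_int z) ` V" by (rule imageI)
    then have "x \<in> Bad" unfolding Bad_def using z by auto
    then show False using x(2) by simp
  qed
  have sep: "\<not> (x + real_of_int z \<in> S w \<and> x + real_of_int z \<in> S w')"
    if "w \<in> W k" "w' \<in> W k" "w \<noteq> w'" for z w w'
  proof
    assume h: "x + real_of_int z \<in> S w \<and> x + real_of_int z \<in> S w'"
    have q: "(z, (w, w')) \<in> UNIV \<times> P" using that unfolding P_def by auto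
    have "(x + real_of_int z) - real_of_int z \<in> (\<lambda>y. y - real_of_int z) ` (S w \<inter> S w')"
      using h by (intro imageI) auto
    then have "x \<in> Null" unfolding Null_def using q by force
    then show False using x(3) by simp
  qed
  obtain k' where kk: "k = Suc k'" using k by (cases k) auto
  define A where "A = {a::int. x + real_of_int a \<in> X}"
  define c where "c = m + int n"
  define E where "E = {e. \<exists>a\<in>A. \<exists>v\<in>W k'. e = a + int N * tw N v - c}"
  have ex: "\<exists>d\<in>D. \<exists>e\<in>E. z = d + e" if z: "\<bar>z\<bar> \<le> int n" for z
  proof -
    have "z + c \<in> Z" unfolding Z_def c_def using z by auto
    then have "x + real_of_int (z + c) \<in> Y k" by (rule cov)
    then have "\<exists>w\<in>W (Suc k'). x + real_of_int (z + c) \<in> S w" unfolding Y_char kk .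
    then obtain d v where dv: "d \<in> D" "v \<in> W k'" "x + real_of_int (z + c) \<in> S (d # v)"
      unfolding W_Suc by blast
    define a where "a = z + c - tw N (d # v)"
    have "a \<in> A" using dv(3) unfolding A_def a_def S_def by (simp add: algebra_simps)
    then have "a + int N * tw N v - c \<in> E" unfolding E_def using dv(2) by blast
    moreover have "z = d + (a + int N * tw N v - c)" unfolding a_def by simp
    ultimately show ?thesis using dv(1) by blast
  qed
  have un: "d = d' \<and> e = e'" if dd: "d \<in> D" "d' \<in> D" "e \<in> E" "e' \<in> E" "d + e = d' + e'" for d d' e e'
  proof -
    obtain a v where av: "a \<in> A" "v \<in> W k'" "e = a + int N * tw N v - c" using dd(3) unfolding E_def by blast
    obtain a' v' where av': "a' \<in> A" "v' \<in> W k'" "e' = a' + int N * tw N v' - c" using dd(4) unfolding E_def by blast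
    define z0 where "z0 = d + e + c"
    have w1: "d # v \<in> W k" using dd(1) av(2) unfolding kk W_def by auto
    have w2: "d' # v' \<in> W k" using dd(2) av'(2) unfolding kk W_def by auto
    have "real_of_int z0 - real_of_int (tw N (d # v)) = real_of_int a"
      unfolding z0_def av(3) by simp
    then have s1: "x + real_of_int z0 \<in> S (d # v)" using av(1) unfolding S_def A_def by (simp add: algebra_simps)
    have "real_of_int z0 - real_of_int (tw N (d' # v')) = real_of_int a'"
      unfolding z0_def dd(5) av'(3) by simp
    then have s2: "x + real_of_int z0 \<in> S (d' # v')" using av'(1) unfolding S_def A_def by (simp add: algebra_simps)
    have "d # v = d' # v'" using sep[OF w1 w2] s1 s2 by blast
    then have "d = d'" by simp
    then show ?thesis using dd(5) by simp
  qed
  show ?thesis using ex un by blast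
qed

end

theorem proposition4p3:
  fixes N :: nat and D :: "int set" and X :: "real set"
  assumes "N \<ge> 2"
    and "finite D" and "card D = N"
    and "is_attractor N D X"
    and "emeasure lebesgue X > 0"
  shows "\<exists>E :: int set. direct_sum_Z D E"
proof -
  interpret ifs N D X using assms by unfold_locales
  have "\<forall>n. \<exists>E. (\<forall>z. \<bar>z\<bar> \<le> int n \<longrightarrow> (\<exists>d\<in>D. \<exists>e\<in>E. z = d + e)) \<and>
       (\<forall>d\<in>D. \<forall>d'\<in>D. \<forall>e\<in>E. \<forall>e'\<in>E. d + e = d' + e' \<longrightarrow> d = d' \<and> e = e')"
    using stage by blast
  then obtain Es where Es: "\<And>n. (\<forall>z. \<bar>z\<bar> \<le> int n \<longrightarrow> (\<exists>d\<in>D. \<exists>e\<in>Es n. z = d + e)) \<and>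
       (\<forall>d\<in>D. \<forall>d'\<in>D. \<forall>e\<in>Es n. \<forall>e'\<in>Es n. d + e = d' + e' \<longrightarrow> d = d' \<and> e = e')"
    by metis
  obtain E where E: "\<And>M. \<exists>n\<ge>M. E \<inter> win M = Es n \<inter> win M" using compactness_Z by blast
  have Dne: "D \<noteq> {}" using assms(1,3) by auto
  define B where "B = Max (abs ` D)"
  have dB: "\<bar>d\<bar> \<le> B" if "d \<in> D" for d unfolding B_def using that assms(2) by (intro Max_ge) auto
  have B0: "B \<ge> 0" using Dne dB by force
  have "direct_sum_Z D E" unfolding direct_sum_Z_def
  proof
    fix z :: int
    define M where "M = nat (\<bar>z\<bar> + B)"
    obtain n where n: "n \<ge> M" "E \<inter> win M = Es n \<inter> win M" using E by blast
    have zn: "\<bar>z\<bar> \<le> int n" using n(1) B0 unfolding M_def by linarith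
    obtain d e where de: "d \<in> D" "e \<in> Es n" "z = d + e" using Es[of n] zn by blast
    have "\<bar>e\<bar> \<le> int M" using dB[OF de(1)] de(3) B0 unfolding M_def by linarith
    then have "e \<in> win M" unfolding win_def by auto
    then have eE: "e \<in> E" using n(2) de(2) by blast
    show "\<exists>!p. p \<in> D \<times> E \<and> z = fst p + snd p"
    proof (rule ex1I[of _ "(d, e)"])
      show "(d, e) \<in> D \<times> E \<and> z = fst (d, e) + snd (d, e)" using de eE by simp
    next
      fix p assume p: "p \<in> D \<times> E \<and> z = fst p + snd p"
      obtain d' e' where p': "p = (d', e')" by (cases p)
      have d': "d' \<in> D" "e' \<in> E" "z = d' + e'" using p p' by auto
      have "\<bar>e'\<bar> \<le> int M" using dB[OF d'(1)] d'(3) B0 unfolding M_def by linarith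
      then have "e' \<in> win M" unfolding win_def by auto
      then have "e' \<in> Es n" using n(2) d'(2) by blast
      then have "d' = d \<and> e' = e" using Es[of n] d'(1) de(1,2) d'(3) de(3) by metis
      then show "p = (d, e)" using p' by simp
    qed
  qed
  then show ?thesis by blast
qed

end
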